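(* Let $\lambda>0$ and let $n\ge2$ be an integer. With the notation of the context, 1. $\displaystyle R_1(F)=\frac{e^{-n\lambda}}{2[1-e^{-\lambda}]^{n-1}}\int_0^1 I_0(2\lambda y)\,[e^{\lambda y}-1]^{n-2}\,dy+\frac{e^{-\lambda}+n-1}{2n(n-1)\lambda}-\frac{e^{-\lambda}}{(n-1)\lambda}$; 2. $\displaystyle R_\infty(F)=\frac{1-e^{-\lambda}}{n\lambda}$.
   Context: $P_\lambda(k)=\frac{1}{1-e^{-\lambda}}\frac{e^{-\lambda}\lambda^k}{k!}$, $k\ge1$, is the zero-truncated Poisson pmf. $X^*$ is a random variable with $\mathbb{P}(X^*=k)=e^{-\lambda}\lambda^{k-1}/(k-1)!$, $k\ge1$. For $x>0$ and real $s>0$, $H(x,s):=\frac{e^{-\lambda}}{1-e^{-\lambda}}\left\{\frac{\exp[\lambda e^{-x}]\,\Gamma(s,\lambda e^{-x})}{\Gamma(s)}-1\right\}$ (equal to $\sum_{k=1}^{s-1}e^{-xk}P_\lambda(k)$ for integer $s\ge1$), with $\Gamma(s,y)$ the upper incomplete gamma function. $\mathscr{L}_F(x)=\sum_{k\ge1}e^{-xk}P_\lambda(k)$. For $\varepsilon>0$, $R_\varepsilon(F)=\int_0^\infty\mathbb{E}\big[e^{-xX^*}H(x,\varepsilon X^* )\big]\,\mathscr{L}_F(x)^{n-2}\,dx$, and $R_1(F)=\int_0^\infty\lim_{\varepsilon\to1}\mathbb{E}[e^{-xX^*}H(x,\varepsilon X^* )]\mathscr{L}_F(x)^{n-2}dx$,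 $R_\infty(F)=\int_0^\infty\lim_{\varepsilon\to\infty}\mathbb{E}[e^{-xX^*}H(x,\varepsilon X^* )]\mathscr{L}_F(x)^{n-2}dx$. $I_0$ is the modified Bessel function of the first kind of order zero. *)

theory Defs
  imports "HOL-Analysis.Analysis"
begin

definition ztp_pmf :: "real \<Rightarrow> nat \<Rightarrow> real" where
  "ztp_pmf l k = (1 / (1 - exp (- l))) * (exp (- l) * l ^ k / fact k)"

definition xstar_pmf :: "real \<Rightarrow> nat \<Rightarrow> real" where
  "xstar_pmf l k = exp (- l) * l ^ (k - 1) / fact (k - 1)"

definition upper_Gamma :: "real \<Rightarrow> real \<Rightarrow> real" where
  "upper_Gamma s y = (LBINT t:{y<..}. t powr (s - 1) * exp (- t))"

definition H :: "real \<Rightarrow> real \<Rightarrow> real \<Rightarrow> real" where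
  "H l x s = exp (- l) / (1 - exp (- l)) *
     (exp (l * exp (- x)) * upper_Gamma s (l * exp (- x)) / Gamma s - 1)"

definition LF :: "real \<Rightarrow> real \<Rightarrow> real" where
  "LF l x = (\<Sum>k. exp (- x * real (Suc k)) * ztp_pmf l (Suc k))"

definition EH :: "real \<Rightarrow> real \<Rightarrow> real \<Rightarrow> real" where
  "EH l x eps = (\<Sum>k. xstar_pmf l (Suc k) * (exp (- x * real (Suc k)) * H l x (eps * real (Suc k))))"

definition R1 :: "real \<Rightarrow> nat \<Rightarrow> real" where
  "R1 l n = (LBINT x:{0<..}. Lim (at (1::real)) (\<lambda>eps. EH l x eps) * LF l x ^ (n - 2))"

definition Rinf :: "real \<Rightarrow> nat \<Rightarrow> real" where
  "Rinf l n = (LBINT x:{0<..}. Lim at_top (\<lambda>eps. EH l x eps) * LF l x ^ (n - 2))"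

definition I0 :: "real \<Rightarrow> real" where
  "I0 y = (\<Sum>m. (y / 2) ^ (2 * m) / (fact m) ^ 2)"

end

theory Submission
  imports Defs
begin


lemma E_deriv: fixes t :: real shows
  "DERIV (\<lambda>t. exp (-t) * (\<Sum>j<Suc m. t^j / fact j)) t :> - (exp (-t) * t^m / fact m)"
proof (induction m)
  case 0
  then show ?case by (auto intro!: derivative_eq_intros)
next
  case (Suc m)
  have eq: "(\<lambda>t. exp (-t) * (\<Sum>j<Suc (Suc m). t^j / fact j)) =
     (\<lambda>t. exp (-t) * (\<Sum>j<Suc m. t^j / fact j) + exp (-t) * (t^Suc m / fact (Suc m)))"
    by (simp add: algebra_simps)
  have d2: "DERIV (\<lambda>t. exp (-t) * (t^Suc m / fact (Suc m))) t :>
       - exp (-t) * (t^Suc m / fact (Suc m)) + exp (-t) * (real (Suc m) * t^m / fact (Suc m))"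
  proof -
    have p: "DERIV (\<lambda>t. t^Suc m) t :> real (Suc m) * t^m" using DERIV_pow[of "Suc m" t] by simp
    have e: "DERIV (\<lambda>t. exp (-t)) t :> - exp (-t)" by (auto intro!: derivative_eq_intros)
    show ?thesis using DERIV_mult[OF e DERIV_cdivide[OF p, of "fact (Suc m)"]] by (simp add: algebra_simps)
  qed
  have "DERIV (\<lambda>t. exp (-t) * (\<Sum>j<Suc (Suc m). t^j / fact j)) t :>
      - (exp (-t) * t^m / fact m) + (- exp (-t) * (t^Suc m / fact (Suc m)) + exp (-t) * (real (Suc m) * t^m / fact (Suc m)))"
    unfolding eq by (intro DERIV_add Suc d2)
  moreover have "- (exp (-t) * t^m / fact m) + (- exp (-t) * (t^Suc m / fact (Suc m)) + exp (-t) * (real (Suc m) * t^m / fact (Suc m)))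
     = - (exp (-t) * t^Suc m / fact (Suc m))"
  proof -
    have f: "real (Suc m) * t^m / fact (Suc m) = t^m / fact m" by (simp add: fact_Suc)
    have "exp (-t) * (real (Suc m) * t^m / fact (Suc m)) = exp (-t) * t^m / fact m" by (simp add: f)
    then show ?thesis by simp
  qed
  ultimately show ?case by simp
qed

lemma isCont_exp_minus_aux: "isCont (\<lambda>x::real. exp (- x)) t" by simp

lemma UG_int:
  assumes "y > 0"
  shows "upper_Gamma (real (Suc m)) y = fact m * (exp (-y) * (\<Sum>j<Suc m. y^j/fact j))"
proof -
  let ?E = "\<lambda>t::real. exp (-t) * (\<Sum>j<Suc m. t^j / fact j)"
  let ?F = "\<lambda>t. - fact m * ?E t"
  have "upper_Gamma (real (Suc m)) y = (LBINT t:{y<..}. t^m * exp (-t))"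
    unfolding upper_Gamma_def
    by (rule set_lebesgue_integral_cong) (use assms in \<open>auto simp: powr_realpow\<close>)
  also have "\<dots> = (LBINT t=ereal y..\<infinity>. t^m * exp (-t))"
    by (simp add: interval_lebesgue_integral_def)
  also have "\<dots> = 0 - ?F y"
  proof (rule interval_integral_FTC_nonneg)
    show "ereal y < \<infinity>" by simp
    show "DERIV ?F t :> t^m * exp (-t)" for t
    proof -
      have "DERIV ?F t :> - fact m * (- (exp (-t) * t^m / fact m))"
        by (intro DERIV_cmult E_deriv)
      then show ?thesis by (simp only: mult.commute[of "t^m"]) simp
    qed
    show "isCont (\<lambda>t. t^m * exp (-t)) t" for t :: real using isCont_exp_minus_aux[of t] by (intro continuous_intros)
    show "AE x in lborel. ereal y < ereal x \<longrightarrow> ereal x < \<infinity> \<longrightarrow> 0 \<le> x^m * exp (-x)"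
      using assms by (intro AE_I2) auto
    show "((?F \<circ> real_of_ereal) \<longlongrightarrow> ?F y) (at_right (ereal y))"
      unfolding ereal_tendsto_simps by (intro tendsto_intros) auto
    have "((\<lambda>t. - fact m * (\<Sum>j<Suc m. (t^j / exp t) / fact j)) \<longlongrightarrow> - fact m * (\<Sum>j<Suc m. 0 / (fact j::real))) at_top"
      by (intro tendsto_intros tendsto_power_div_exp_0) simp_all
    then have "(?F \<longlongrightarrow> 0) at_top"
      by (simp add: exp_minus sum_distrib_left field_simps)
    then show "((?F \<circ> real_of_ereal) \<longlongrightarrow> 0) (at_left \<infinity>)"
      unfolding ereal_tendsto_simps .
  qed
  finally show ?thesis by simp
qed

lemma leb_to_lborel:
  fixes f :: "real \<Rightarrow> real"
  assumes "f absolutely_integrable_on S" "S \<in> sets borel" "f \<in> borel_measurable borel"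
  shows "set_integrable lborel S f"
proof -
  have m: "(\<lambda>x. indicator S x *\<^sub>R f x) \<in> borel_measurable lborel" using assms by measurable
  have "integrable lebesgue (\<lambda>x. indicator S x *\<^sub>R f x)" using assms(1) by (simp add: set_integrable_def)
  then show ?thesis unfolding set_integrable_def using integrable_completion[OF m] by simp
qed

definition gf :: "real \<Rightarrow> real \<Rightarrow> real" where "gf s t = t powr (s - 1) * exp (- t)"

lemma gf_meas[measurable]: "gf s \<in> borel_measurable borel"
  unfolding gf_def by measurable

lemma gf_nonneg: "0 \<le> gf s t" unfolding gf_def by simp

lemma UG_gf: "upper_Gamma s y = (LBINT t:{y<..}. gf s t)"
  unfolding upper_Gamma_def gf_def ..

lemma Gamma_set:
  assumes "s > 0"
  shows "set_integrable lborel {0..} (gf s)" "Gamma s = (LBINT t:{0..}. gf s t)"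
proof -
  have hi: "(gf s has_integral Gamma s) {0..}"
    using Gamma_integral_real[OF assms] by (simp add: gf_def[abs_def] exp_minus divide_inverse)
  then have "gf s absolutely_integrable_on {0..}"
    by (intro nonnegative_absolutely_integrable_1) (auto simp: gf_nonneg)
  then show si: "set_integrable lborel {0..} (gf s)"
    by (intro leb_to_lborel) auto
  show "Gamma s = (LBINT t:{0..}. gf s t)"
    using set_borel_integral_eq_integral(2)[OF si] hi by (simp add: integral_unique)
qed

lemma UG_bounds:
  assumes "s > 0" "y > 0"
  shows "set_integrable lborel {y<..} (gf s)" "0 \<le> upper_Gamma s y" "upper_Gamma s y \<le> Gamma s"
proof -
  show si: "set_integrable lborel {y<..} (gf s)"
    by (rule set_integrable_subset[OF Gamma_set(1)[OF assms(1)]]) (use assms in auto)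
  show "0 \<le> upper_Gamma s y" unfolding UG_gf set_lebesgue_integral_def by (auto intro!: integral_nonneg simp: gf_nonneg split: split_indicator)
  have s0: "set_integrable lborel {0..} (gf s)" by (rule Gamma_set(1)[OF assms(1)])
  have "upper_Gamma s y = integral {y<..} (gf s)"
    unfolding UG_gf by (rule set_borel_integral_eq_integral(2)[OF si])
  also have "\<dots> \<le> integral {0..} (gf s)"
    by (intro integral_subset_le set_borel_integral_eq_integral(1)[OF si]
        set_borel_integral_eq_integral(1)[OF s0]) (use assms in \<open>auto simp: gf_nonneg\<close>)
  also have "\<dots> = Gamma s"
    using set_borel_integral_eq_integral(2)[OF s0] Gamma_set(2)[OF assms(1)] by simp
  finally show "upper_Gamma s y \<le> Gamma s" .
qed

lemma UG_lower:
  assumes "s \<ge> 1" "y > 0"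
  shows "(y + 1) powr (s - 1) * exp (- (y + 2)) \<le> upper_Gamma s y"
proof -
  have si: "set_integrable lborel {y<..} (gf s)" using UG_bounds(1)[of s y] assms by simp
  have ci: "gf s integrable_on {y+1..y+2}"
    unfolding gf_def
    by (intro integrable_continuous_interval continuous_intros) (use assms in auto)
  have "(y + 1) powr (s - 1) * exp (- (y + 2)) = integral {y+1..y+2} (\<lambda>_. (y + 1) powr (s - 1) * exp (- (y + 2)))"
    by simp
  also have "\<dots> \<le> integral {y+1..y+2} (gf s)"
    unfolding gf_def
  proof (rule integral_le)
    show "(\<lambda>t. t powr (s - 1) * exp (- t)) integrable_on {y + 1..y + 2}" using ci unfolding gf_def .
    fix t assume t: "t \<in> {y+1..y+2}"
    show "(y + 1) powr (s - 1) * exp (- (y + 2)) \<le> t powr (s - 1) * exp (- t)"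
      using t assms by (intro mult_mono powr_mono2) auto
  qed auto
  also have "\<dots> \<le> integral {y<..} (gf s)"
    by (intro integral_subset_le ci set_borel_integral_eq_integral(1)[OF si]) (use assms in \<open>auto simp: gf_nonneg\<close>)
  also have "\<dots> = upper_Gamma s y"
    unfolding UG_gf by (rule set_borel_integral_eq_integral(2)[OF si, symmetric])
  finally show ?thesis .
qed

lemma lower_gamma_bound:
  assumes "s \<ge> 1" "y > 0"
  shows "Gamma s - upper_Gamma s y \<le> y powr s"
proof -
  have s0: "set_integrable lborel {0..} (gf s)" using Gamma_set(1)[of s] assms by simp
  have si: "set_integrable lborel {y<..} (gf s)" using UG_bounds(1)[of s y] assms by simp
  have sy: "set_integrable lborel {0..y} (gf s)"
    by (rule set_integrable_subset[OF s0]) auto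
  have un: "{0..} = {0..y} \<union> {y<..}" using assms by auto
  have "Gamma s = (LBINT t:{0..y}. gf s t) + upper_Gamma s y"
    unfolding Gamma_set(2)[OF order.strict_trans2[OF zero_less_one assms(1)]] UG_gf un
    by (rule set_integral_Un[OF _ sy si]) auto
  moreover have "(LBINT t:{0..y}. gf s t) \<le> y powr s"
  proof -
    have "(LBINT t:{0..y}. gf s t) = integral {0..y} (gf s)"
      by (rule set_borel_integral_eq_integral(2)[OF sy])
    also have "\<dots> \<le> integral {0..y} (\<lambda>_. y powr (s - 1))"
    proof (rule integral_le)
      show "gf s integrable_on {0..y}" by (rule set_borel_integral_eq_integral(1)[OF sy])
      fix t assume t: "t \<in> {0..y}"
      have "t powr (s - 1) \<le> y powr (s - 1)" using t assms by (intro powr_mono2) auto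
      moreover have "exp (-t) \<le> 1" using t by simp
      ultimately show "gf s t \<le> y powr (s - 1)" unfolding gf_def
        by (metis mult_left_le mult_le_one powr_ge_zero exp_ge_zero order_trans mult.commute
            mult_right_mono)
    qed auto
    also have "\<dots> = y * y powr (s - 1)" using assms by simp
    also have "\<dots> = y powr s" using assms by (simp add: powr_mult_base)
    finally show ?thesis .
  qed
  ultimately show ?thesis by simp
qed

lemma gf_dom:
  assumes "0 < a" "a \<le> s" "s \<le> b" "t > 0"
  shows "gf s t \<le> gf a t + gf b t"
proof (cases "t \<le> 1")
  case True
  then have "t powr (s - 1) \<le> t powr (a - 1)" using assms by (intro powr_mono') auto
  then have "gf s t \<le> gf a t" unfolding gf_def by (intro mult_right_mono) auto
  then show ?thesis using gf_nonneg[of b t] by linarith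
next
  case False
  then have "t powr (s - 1) \<le> t powr (b - 1)" using assms by (intro powr_mono) auto
  then have "gf s t \<le> gf b t" unfolding gf_def by (intro mult_right_mono) auto
  then show ?thesis using gf_nonneg[of a t] by linarith
qed

lemma UG_cont:
  assumes "s0 > 0" "y > 0"
  shows "isCont (\<lambda>s. upper_Gamma s y) s0"
proof (rule continuous_at_sequentiallyI)
  fix X :: "nat \<Rightarrow> real" assume X: "X \<longlonglongrightarrow> s0"
  define X' where "X' n = max (s0/2) (min (2 * s0) (X n))" for n
  have X': "X' \<longlonglongrightarrow> max (s0/2) (min (2 * s0) s0)"
    unfolding X'_def by (intro tendsto_intros X)
  have "max (s0/2) (min (2 * s0) s0) = s0" using assms by simp
  with X' have X'': "X' \<longlonglongrightarrow> s0" by simp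
  have ev: "eventually (\<lambda>n. X' n = X n) sequentially"
  proof -
    have "eventually (\<lambda>n. X n > s0/2) sequentially" using X assms by (intro order_tendstoD) auto
    moreover have "eventually (\<lambda>n. X n < 2 * s0) sequentially" using X assms by (intro order_tendstoD) auto
    ultimately show ?thesis by eventually_elim (auto simp: X'_def)
  qed
  have rng: "s0/2 \<le> X' n \<and> X' n \<le> 2 * s0" for n unfolding X'_def using assms by auto
  let ?w = "\<lambda>t. indicator {y<..} t *\<^sub>R (gf (s0/2) t + gf (2 * s0) t)"
  have "(\<lambda>n. integral\<^sup>L lborel (\<lambda>t. indicator {y<..} t *\<^sub>R gf (X' n) t))
          \<longlonglongrightarrow> integral\<^sup>L lborel (\<lambda>t. indicator {y<..} t *\<^sub>R gf s0 t)"
  proof (rule integral_dominated_convergence[where w = ?w])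
    show "(\<lambda>t. indicator {y<..} t *\<^sub>R gf s0 t) \<in> borel_measurable lborel" by measurable
    show "(\<lambda>t. indicator {y<..} t *\<^sub>R gf (X' n) t) \<in> borel_measurable lborel" for n by measurable
    have "set_integrable lborel {y<..} (\<lambda>t. gf (s0/2) t + gf (2 * s0) t)"
      using UG_bounds(1)[of "s0/2" y] UG_bounds(1)[of "2 * s0" y] assms by (intro set_integral_add) auto
    then show "integrable lborel ?w" unfolding set_integrable_def .
    show "AE t in lborel. (\<lambda>n. indicator {y<..} t *\<^sub>R gf (X' n) t) \<longlonglongrightarrow> indicator {y<..} t *\<^sub>R gf s0 t"
    proof (intro AE_I2)
      fix t :: real
      show "(\<lambda>n. indicator {y<..} t *\<^sub>R gf (X' n) t) \<longlonglongrightarrow> indicator {y<..} t *\<^sub>R gf s0 t"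
      proof (cases "t > y")
        case True
        then have "t > 0" using assms by simp
        then show ?thesis unfolding gf_def using True by (auto intro!: tendsto_intros X'')
      qed auto
    qed
    show "AE t in lborel. norm (indicator {y<..} t *\<^sub>R gf (X' n) t) \<le> ?w t" for n
    proof (intro AE_I2)
      fix t :: real
      show "norm (indicator {y<..} t *\<^sub>R gf (X' n) t) \<le> ?w t"
      proof (cases "t > y")
        case True
        then have "gf (X' n) t \<le> gf (s0/2) t + gf (2 * s0) t"
          using assms rng[of n] by (intro gf_dom) auto
        then show ?thesis using True gf_nonneg[of "X' n" t] by simp
      qed auto
    qed
  qed
  then have "(\<lambda>n. upper_Gamma (X' n) y) \<longlonglongrightarrow> upper_Gamma s0 y"
    unfolding UG_gf set_lebesgue_integral_def .
  then show "(\<lambda>n. upper_Gamma (X n) y) \<longlonglongrightarrow> upper_Gamma s0 y"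
    by (rule Lim_transform_eventually) (use ev in \<open>eventually_elim, simp\<close>)
qed

lemma powr_lim0: fixes q :: real assumes "0 < q" "q < 1" shows "((\<lambda>s. q powr s) \<longlongrightarrow> 0) at_top"
proof -
  have "ln q < 0" using assms by simp
  have "filterlim (\<lambda>s. ln q * s) at_bot at_top"
    by (rule filterlim_tendsto_neg_mult_at_bot[OF tendsto_const \<open>ln q < 0\<close> filterlim_ident])
  then have "((\<lambda>s. exp (ln q * s)) \<longlongrightarrow> 0) at_top"
    by (rule filterlim_compose[OF exp_at_bot])
  then show ?thesis using assms by (simp add: powr_def mult.commute)
qed

lemma UG_ratio_lim:
  assumes "y > 0"
  shows "((\<lambda>s. upper_Gamma s y / Gamma s) \<longlongrightarrow> 1) at_top"
proof -
  define q where "q = y / (y + 1)"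
  define K where "K = (y + 1) * exp (y + 2)"
  have q: "0 < q" "q < 1" using assms by (auto simp: q_def)
  have bnd: "0 \<le> 1 - upper_Gamma s y / Gamma s \<and> 1 - upper_Gamma s y / Gamma s \<le> K * q powr s" if s: "s \<ge> 1" for s
  proof -
    have s0: "s > 0" using s by simp
    have G: "Gamma s > 0" using s0 by simp
    have ub: "upper_Gamma s y \<le> Gamma s" using UG_bounds(3)[OF s0 assms] .
    have lb: "(y + 1) powr (s - 1) * exp (- (y + 2)) \<le> Gamma s"
      using UG_lower[OF s assms] ub by linarith
    have lg: "Gamma s - upper_Gamma s y \<le> y powr s" using lower_gamma_bound[OF s assms] .
    have L: "(y + 1) powr (s - 1) * exp (- (y + 2)) > 0" using assms by simp
    have eq1: "1 - upper_Gamma s y / Gamma s = (Gamma s - upper_Gamma s y) / Gamma s" using G by (simp add: field_simps)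
    have "(Gamma s - upper_Gamma s y) / Gamma s \<le> y powr s / Gamma s"
      using lg G by (intro divide_right_mono) auto
    also have "\<dots> \<le> y powr s / ((y + 1) powr (s - 1) * exp (- (y + 2)))"
      using lb L assms G by (intro divide_left_mono) auto
    also have "\<dots> = K * q powr s"
    proof -
      have A: "(y + 1) powr (s - 1) = (y + 1) powr s / (y + 1)" using assms by (simp add: powr_diff)
      have C: "q powr s = y powr s / (y + 1) powr s" unfolding q_def by (rule powr_divide)
      have B: "exp (- (y + 2)) = 1 / exp (y + 2)" by (metis exp_minus inverse_eq_divide)
      have P: "(y + 1) powr s > 0" "exp (y + 2) > 0" "y + 1 > 0" using assms by auto
      have "y powr s / ((y + 1) powr (s - 1) * exp (- (y + 2)))
          = y powr s / (((y + 1) powr s / (y + 1)) * (1 / exp (y + 2)))" by (simp only: A B)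
      also have "\<dots> = (y + 1) * exp (y + 2) * (y powr s / (y + 1) powr s)"
        using P by (simp add: field_simps)
      also have "\<dots> = K * q powr s" by (simp add: K_def C)
      finally show ?thesis .
    qed
    finally show ?thesis using eq1 ub G by (simp add: field_simps)
  qed
  have "((\<lambda>s. 1 - upper_Gamma s y / Gamma s) \<longlongrightarrow> 0) at_top"
  proof (rule tendsto_sandwich[where f = "\<lambda>_. 0" and h = "\<lambda>s. K * q powr s"])
    show "eventually (\<lambda>s. 0 \<le> 1 - upper_Gamma s y / Gamma s) at_top"
      using eventually_ge_at_top[of 1] by eventually_elim (use bnd in auto)
    show "eventually (\<lambda>s. 1 - upper_Gamma s y / Gamma s \<le> K * q powr s) at_top"
      using eventually_ge_at_top[of 1] by eventually_elim (use bnd in auto)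
    show "((\<lambda>s. K * q powr s) \<longlongrightarrow> 0) at_top"
      using tendsto_mult[OF tendsto_const powr_lim0[OF q]] by simp
  qed simp
  then have "((\<lambda>s. 1 - (1 - upper_Gamma s y / Gamma s)) \<longlongrightarrow> 1 - 0) at_top"
    by (intro tendsto_intros)
  then show ?thesis by simp
qed

definition cc :: "real \<Rightarrow> real" where "cc l = exp (- l) / (1 - exp (- l))"

lemma cc_pos: "l > 0 \<Longrightarrow> cc l > 0"
  unfolding cc_def by (simp add: divide_pos_pos)

lemma H_int:
  assumes "l > 0"
  shows "H l x (real (Suc m)) = cc l * (\<Sum>j<m. (l * exp (- x)) ^ Suc j / fact (Suc j))"
proof -
  define y where "y = l * exp (- x)"
  have y: "y > 0" using assms by (simp add: y_def)
  have G: "Gamma (real (Suc m)) = fact m" using Gamma_fact[of m] by (simp add: add.commute)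
  have S: "(\<Sum>j<Suc m. y^j / fact j) = 1 + (\<Sum>j<m. y ^ Suc j / fact (Suc j))"
    by (simp only: sum.lessThan_Suc_shift) simp
  have "exp y * upper_Gamma (real (Suc m)) y / Gamma (real (Suc m)) = (\<Sum>j<Suc m. y^j / fact j)"
    unfolding UG_int[OF y] G by (simp add: exp_minus field_simps)
  then show ?thesis unfolding H_def cc_def y_def[symmetric] S by simp
qed

lemma H_bound:
  assumes "l > 0" "s > 0"
  shows "\<bar>H l x s\<bar> \<le> cc l * (exp (l * exp (- x)) + 1)"
proof -
  define y where "y = l * exp (- x)"
  have y: "y > 0" using assms by (simp add: y_def)
  have G: "Gamma s > 0" using assms by simp
  have r: "0 \<le> upper_Gamma s y / Gamma s" "upper_Gamma s y / Gamma s \<le> 1"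
    using UG_bounds(2,3)[OF assms(2) y] G by auto
  have eq: "exp y * upper_Gamma s y / Gamma s = exp y * (upper_Gamma s y / Gamma s)" by simp
  have "0 \<le> exp y * (upper_Gamma s y / Gamma s)" using r by (intro mult_nonneg_nonneg) auto
  moreover have "exp y * (upper_Gamma s y / Gamma s) \<le> exp y" using r by (intro mult_left_le) auto
  ultimately have "\<bar>exp y * upper_Gamma s y / Gamma s - 1\<bar> \<le> exp y + 1" unfolding eq by auto
  then show ?thesis unfolding H_def y_def[symmetric] cc_def[symmetric]
    using cc_pos[OF assms(1)] by (simp add: abs_mult)
qed

lemma H_cont:
  assumes "l > 0" "s0 > 0"
  shows "isCont (\<lambda>s. H l x s) s0"
proof -
  have y: "l * exp (- x) > 0" using assms by simp
  have ni: "s0 \<notin> \<int>\<^sub>\<le>\<^sub>0" using assms(2) by (auto elim!: nonpos_Ints_cases)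
  have G: "Gamma s0 \<noteq> 0" using Gamma_real_pos[OF assms(2)] by linarith
  show ?thesis unfolding H_def
    by (intro continuous_intros UG_cont[OF assms(2) y] isCont_Gamma ni G)
qed

lemma H_lim:
  assumes "l > 0"
  shows "((\<lambda>s. H l x s) \<longlongrightarrow> cc l * (exp (l * exp (- x)) - 1)) at_top"
proof -
  have y: "l * exp (- x) > 0" using assms by simp
  have "((\<lambda>s. exp (- l) / (1 - exp (- l)) * (exp (l * exp (- x)) * (upper_Gamma s (l * exp (- x)) / Gamma s) - 1))
        \<longlongrightarrow> exp (- l) / (1 - exp (- l)) * (exp (l * exp (- x)) * 1 - 1)) at_top"
    by (intro tendsto_intros UG_ratio_lim y)
  then show ?thesis unfolding H_def cc_def by simp
qed

lemma exp_sums: "(\<lambda>n. l^n / fact n) sums exp (l::real)"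
  using exp_converges[of l] by (simp add: divide_inverse scaleR_conv_of_real mult.commute)

lemma EH_tendsto:
  fixes F :: "real filter"
  assumes l: "l > 0" and x: "x > 0" and F: "F \<noteq> bot" and pos: "eventually (\<lambda>e. e > 0) F"
    and lim: "\<And>k. ((\<lambda>e. H l x (e * real (Suc k))) \<longlongrightarrow> h k) F"
  shows "((\<lambda>e. EH l x e) \<longlongrightarrow> (\<Sum>k. xstar_pmf l (Suc k) * (exp (- x * real (Suc k)) * h k))) F"
proof -
  define C where "C = cc l * (exp (l * exp (- x)) + 1)"
  define M where "M k = xstar_pmf l (Suc k) * C" for k
  have sM: "summable M"
    unfolding M_def xstar_pmf_def
    using summable_mult[OF sums_summable[OF exp_sums[of l]], of "exp (- l)"]
    by (intro summable_mult2) (simp add: mult.assoc)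
  have xs: "xstar_pmf l k \<ge> 0" for k unfolding xstar_pmf_def using l by simp
  have bound: "norm (xstar_pmf l (Suc k) * (exp (- x * real (Suc k)) * H l x (e * real (Suc k)))) \<le> M k"
    if e: "e > 0" for k e
  proof -
    have "\<bar>H l x (e * real (Suc k))\<bar> \<le> C" unfolding C_def using e by (intro H_bound l) simp
    moreover have "exp (- x * real (Suc k)) \<le> 1" using x by simp
    ultimately have "exp (- x * real (Suc k)) * \<bar>H l x (e * real (Suc k))\<bar> \<le> 1 * C"
      by (intro mult_mono) auto
    then have "\<bar>exp (- x * real (Suc k)) * H l x (e * real (Suc k))\<bar> \<le> C"
      by (simp add: abs_mult)
    then show ?thesis unfolding M_def using xs[of "Suc k"] by (simp add: abs_mult mult_left_mono)
  qed
  have ev: "eventually (\<lambda>(k, e). norm (xstar_pmf l (Suc k) * (exp (- x * real (Suc k)) * H l x (e * real (Suc k)))) \<le> M k) (at_top \<times>\<^sub>F F)"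
    unfolding eventually_prod_filter
    by (rule exI[of _ "\<lambda>_. True"], rule exI[of _ "\<lambda>e. e > 0"]) (use pos bound in auto)
  have "((\<lambda>e. \<Sum>k. xstar_pmf l (Suc k) * (exp (- x * real (Suc k)) * H l x (e * real (Suc k))))
          \<longlongrightarrow> (\<Sum>k. xstar_pmf l (Suc k) * (exp (- x * real (Suc k)) * h k))) F"
  proof -
    have lim': "((\<lambda>e. xstar_pmf l (Suc k) * (exp (- x * real (Suc k)) * H l x (e * real (Suc k))))
        \<longlongrightarrow> xstar_pmf l (Suc k) * (exp (- x * real (Suc k)) * h k)) F" for k
      by (intro tendsto_intros lim)
    show ?thesis using tannerys_theorem[OF lim' ev sM F] by blast
  qed
  then show ?thesis unfolding EH_def .
qed



lemma subst01:
  fixes g :: "real \<Rightarrow> real"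
  assumes cont: "continuous_on {0..1} g" and nn: "\<And>y. y \<in> {0..1} \<Longrightarrow> 0 \<le> g y"
  shows "(LBINT x:{0<..}. g (exp (- x)) * exp (- x)) = (LBINT y:{0..1}. g y)"
proof -
  define G where "G t = (LBINT y=ereal 0..ereal t. g y)" for t :: real
  have Gd: "(G has_vector_derivative g t) (at t within {0..1})" if "t \<in> {0..1}" for t
    unfolding G_def using that interval_integral_FTC2[of 0 0 1 g t, OF _ _ cont] by auto
  have Gc: "continuous (at t within {0..1}) G" if "t \<in> {0..1}" for t
    using has_vector_derivative_continuous[OF Gd[OF that]] .
  have Gd': "DERIV G t :> g t" if "0 < t" "t < 1" for t
  proof -
    have "(G has_vector_derivative g t) (at t within {0<..<1})"
      by (rule has_vector_derivative_within_subset[OF Gd]) (use that in auto)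
    then have "(G has_vector_derivative g t) (at t)"
      using has_vector_derivative_within_open[of t "{0<..<1}"] that by auto
    then show ?thesis by (simp add: has_real_derivative_iff_has_vector_derivative)
  qed
  let ?F = "\<lambda>x. - G (exp (- x))"
  have "(LBINT x:{0<..}. g (exp (- x)) * exp (- x)) = (LBINT x=ereal 0..\<infinity>. g (exp (- x)) * exp (- x))"
    by (simp add: interval_lebesgue_integral_def)
  also have "\<dots> = - G 0 - (- G 1)"
  proof (rule interval_integral_FTC_nonneg)
    show "ereal 0 < \<infinity>" by simp
    fix x :: real assume "ereal 0 < ereal x" "ereal x < \<infinity>"
    then have x: "x > 0" by simp
    have e: "0 < exp (- x)" "exp (- x) < 1" using x by auto
    have "DERIV (\<lambda>x. G (exp (- x))) x :> g (exp (- x)) * (- exp (- x))"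
    proof (rule DERIV_chain2[of G])
      show "DERIV G (exp (- x)) :> g (exp (- x))" using Gd'[OF e] .
      show "DERIV (\<lambda>x. exp (- x)) x :> - exp (- x)" by (auto intro!: derivative_eq_intros)
    qed
    then have "DERIV ?F x :> - (g (exp (- x)) * (- exp (- x)))"
      by (rule DERIV_minus)
    then show "DERIV ?F x :> g (exp (- x)) * exp (- x)" by simp
    have "continuous (at (exp (- x))) g"
      by (rule continuous_on_interior[OF cont]) (use e in auto)
    then have "isCont (\<lambda>x. g (exp (- x))) x"
        using continuous_at_compose[of x "\<lambda>x. exp (- x)" g] by (simp add: o_def)
    then show "isCont (\<lambda>x. g (exp (- x)) * exp (- x)) x"
      using isCont_exp_minus_aux[of x] by (rule isCont_mult)
  next
    show "AE x in lborel. ereal 0 < ereal x \<longrightarrow> ereal x < \<infinity> \<longrightarrow> 0 \<le> g (exp (- x)) * exp (- x)"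
    proof (intro AE_I2 impI)
      fix x :: real assume "ereal 0 < ereal x"
      then have "exp (- x) \<in> {0..1}" by auto
      then show "0 \<le> g (exp (- x)) * exp (- x)" using nn by simp
    qed
  next
    have "((\<lambda>x. G (exp (- x))) \<longlongrightarrow> G 1) (at_right 0)"
    proof (rule continuous_within_tendsto_compose[OF Gc])
      show "eventually (\<lambda>x. exp (- x) \<in> {0..1}) (at_right (0::real))"
        by (rule eventually_at_rightI[of 0 1]) auto
      have "((\<lambda>x::real. exp (- x)) \<longlongrightarrow> exp (- 0)) (at_right 0)"
        by (intro tendsto_intros)
      then show "((\<lambda>x::real. exp (- x)) \<longlongrightarrow> 1) (at_right 0)" by simp
    qed auto
    then have "(?F \<longlongrightarrow> - G 1) (at_right 0)" by (intro tendsto_intros)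
    then show "((?F \<circ> real_of_ereal) \<longlongrightarrow> - G 1) (at_right (ereal 0))"
      unfolding ereal_tendsto_simps .
  next
    have "((\<lambda>x. G (exp (- x))) \<longlongrightarrow> G 0) at_top"
    proof (rule continuous_within_tendsto_compose[OF Gc])
      show "eventually (\<lambda>x. exp (- x) \<in> {0..1}) (at_top :: real filter)"
        using eventually_ge_at_top[of "0::real"] by eventually_elim auto
      show "((\<lambda>x::real. exp (- x)) \<longlongrightarrow> 0) at_top"
        by (rule filterlim_compose[OF exp_at_bot filterlim_uminus_at_bot_at_top])
    qed auto
    then have "(?F \<longlongrightarrow> - G 0) at_top" by (intro tendsto_intros)
    then show "((?F \<circ> real_of_ereal) \<longlongrightarrow> - G 0) (at_left \<infinity>)"
      unfolding ereal_tendsto_simps .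
  qed
  also have "\<dots> = G 1" by (simp add: G_def)
  also have "\<dots> = (LBINT y:{0..1}. g y)" unfolding G_def by (rule interval_integral_Icc) simp
  finally show ?thesis .
qed


lemma pair_sums:
  fixes a :: "nat \<Rightarrow> real"
  assumes s1: "summable a" and s2: "summable (\<lambda>k. a k ^ 2)"
  shows "(\<lambda>k. a k * (\<Sum>j<Suc k. a j)) sums ((((\<Sum>k. a k))^2 + (\<Sum>k. a k ^ 2)) / 2)"
proof -
  have part: "(\<Sum>k<N. a k * (\<Sum>j<Suc k. a j)) = ((\<Sum>k<N. a k)^2 + (\<Sum>k<N. a k ^ 2)) / 2" for N
    by (induction N) (simp_all add: power2_eq_square algebra_simps)
  have "(\<lambda>N. ((\<Sum>k<N. a k)^2 + (\<Sum>k<N. a k ^ 2)) / 2) \<longlonglongrightarrow> (((\<Sum>k. a k))^2 + (\<Sum>k. a k ^ 2)) / 2"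
    by (intro tendsto_intros summable_LIMSEQ s1 s2) auto
  then show ?thesis unfolding sums_def part .
qed

lemma alpha_sums: fixes z :: real shows "(\<lambda>k. z ^ Suc k / fact (Suc k)) sums (exp z - 1)"
proof -
  have "(\<lambda>n. z^n / fact n) sums (exp z - 1 + z^0 / fact 0)" using exp_sums[of z] by simp
  then show ?thesis by (subst sums_Suc_iff)
qed

lemma I0_sums: fixes z :: real shows "(\<lambda>k. (z ^ Suc k / fact (Suc k))^2) sums (I0 (2 * z) - 1)"
proof -
  let ?f = "\<lambda>m. ((2 * z) / 2) ^ (2 * m) / (fact m) ^ 2"
  have sm: "summable ?f"
  proof (rule summable_comparison_test[OF _ sums_summable[OF exp_sums[of "z^2"]]])
    show "\<exists>N. \<forall>n\<ge>N. norm (?f n) \<le> (z^2)^n / fact n"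
    proof (intro exI allI impI)
      fix n :: nat
      have f1: "(1::real) \<le> fact n" by simp
      have "norm (?f n) = (z^2)^n / (fact n * fact n)" by (simp add: power_mult power2_eq_square)
      also have "\<dots> \<le> (z^2)^n / fact n"
        using f1 by (intro divide_left_mono) (auto intro: order_trans[OF _ mult_right_mono[OF f1]])
      finally show "norm (?f n) \<le> (z^2)^n / fact n" .
    qed
  qed
  have "?f sums I0 (2 * z)" using sm unfolding I0_def by (simp add: summable_sums)
  then have "(\<lambda>m. ?f (Suc m)) sums (I0 (2 * z) - 1)"
    by (subst sums_Suc_iff) simp
  moreover have "?f (Suc m) = (z ^ Suc m / fact (Suc m))^2" for m
    by (simp add: power_mult power_divide power_mult_distrib mult.commute power2_eq_square)
  ultimately show ?thesis by simp
qed

lemma EH_at1: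
  assumes l: "l > 0" and x: "x > 0"
  shows "Lim (at (1::real)) (\<lambda>e. EH l x e) =
    exp (- l) * exp (- x) * cc l * ((exp (l * exp (- x)) - 1)^2 + I0 (2 * (l * exp (- x))) - 1) / 2"
proof -
  define u where "u = exp (- x)"
  define z where "z = l * u"
  define a where "a k = z ^ Suc k / fact (Suc k)" for k
  have lim: "((\<lambda>e. H l x (e * real (Suc k))) \<longlongrightarrow> H l x (real (Suc k))) (at 1)" for k
  proof -
    have "((\<lambda>e. e * real (Suc k)) \<longlongrightarrow> 1 * real (Suc k)) (at (1::real))"
      by (intro tendsto_intros)
    then show ?thesis
      using isCont_tendsto_compose[OF H_cont[OF l, of "real (Suc k)" x]] by simp
  qed
  have pos: "eventually (\<lambda>e::real. e > 0) (at 1)"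
    by (rule order_tendstoD(1)[OF tendsto_ident_at]) simp
  have T: "((\<lambda>e. EH l x e) \<longlongrightarrow> (\<Sum>k. xstar_pmf l (Suc k) * (exp (- x * real (Suc k)) * H l x (real (Suc k))))) (at 1)"
    by (rule EH_tendsto[OF l x _ pos lim]) simp
  have xs: "xstar_pmf l (Suc k) * exp (- x * real (Suc k)) = exp (- l) * u * (z^k / fact k)" for k
  proof -
    have "exp (- x * real (Suc k)) = u ^ Suc k" unfolding u_def
      by (subst exp_of_nat_mult[symmetric]) (simp add: mult.commute)
    then show ?thesis unfolding xstar_pmf_def z_def by (simp add: power_mult_distrib)
  qed
  have Hk: "H l x (real (Suc k)) = cc l * (\<Sum>j<k. a j)" for k
    unfolding H_int[OF l] a_def z_def u_def ..
  define t where "t k = xstar_pmf l (Suc k) * (exp (- x * real (Suc k)) * H l x (real (Suc k)))" for k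
  have tS: "t (Suc k) = exp (- l) * u * cc l * (a k * (\<Sum>j<Suc k. a j))" for k
    unfolding t_def mult.assoc[symmetric] xs Hk a_def by simp
  have t0: "t 0 = 0" unfolding t_def Hk by simp
  have sa: "summable a" unfolding a_def using alpha_sums by (rule sums_summable)
  have sa2: "summable (\<lambda>k. a k ^ 2)" unfolding a_def using I0_sums by (rule sums_summable)
  have "(\<lambda>k. t (Suc k)) sums (exp (- l) * u * cc l * ((((\<Sum>k. a k))^2 + (\<Sum>k. a k ^ 2)) / 2))"
    unfolding tS by (intro sums_mult pair_sums sa sa2)
  moreover have "(\<Sum>k. a k) = exp z - 1" unfolding a_def using alpha_sums by (rule sums_unique[symmetric])
  moreover have "(\<Sum>k. a k ^ 2) = I0 (2 * z) - 1" unfolding a_def using I0_sums by (rule sums_unique[symmetric])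
  ultimately have "(\<lambda>k. t (Suc k)) sums (exp (- l) * u * cc l * ((exp z - 1)^2 + I0 (2 * z) - 1) / 2)"
    by (simp add: add_diff_eq)
  then have "t sums (exp (- l) * u * cc l * ((exp z - 1)^2 + I0 (2 * z) - 1) / 2)"
    using sums_Suc_iff[of t] t0 by simp
  then have "(\<Sum>k. t k) = exp (- l) * u * cc l * ((exp z - 1)^2 + I0 (2 * z) - 1) / 2"
    by (rule sums_unique[symmetric])
  then show ?thesis using tendsto_Lim[OF _ T] unfolding t_def z_def u_def by simp
qed

lemma EH_attop:
  assumes l: "l > 0" and x: "x > 0"
  shows "Lim at_top (\<lambda>e. EH l x e) =
    exp (- l) * exp (- x) * exp (l * exp (- x)) * (cc l * (exp (l * exp (- x)) - 1))"
proof -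
  define u where "u = exp (- x)"
  define z where "z = l * u"
  define c where "c = cc l * (exp (l * exp (- x)) - 1)"
  have lim: "((\<lambda>e. H l x (e * real (Suc k))) \<longlongrightarrow> c) at_top" for k
  proof -
    have "filterlim (\<lambda>e::real. real (Suc k) * e) at_top at_top"
      by (rule filterlim_tendsto_pos_mult_at_top[OF tendsto_const _ filterlim_ident]) simp
    then have "filterlim (\<lambda>e::real. e * real (Suc k)) at_top at_top" by (simp add: mult.commute)
    then show ?thesis unfolding c_def by (rule filterlim_compose[OF H_lim[OF l]])
  qed
  have pos: "eventually (\<lambda>e::real. e > 0) at_top" by (rule eventually_gt_at_top)
  have T: "((\<lambda>e. EH l x e) \<longlongrightarrow> (\<Sum>k. xstar_pmf l (Suc k) * (exp (- x * real (Suc k)) * c))) at_top"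
    by (rule EH_tendsto[OF l x _ pos lim]) simp
  have xs: "xstar_pmf l (Suc k) * (exp (- x * real (Suc k)) * c) = exp (- l) * u * c * (z^k / fact k)" for k
  proof -
    have "exp (- x * real (Suc k)) = u ^ Suc k" unfolding u_def
      by (subst exp_of_nat_mult[symmetric]) (simp add: mult.commute)
    then show ?thesis unfolding xstar_pmf_def z_def by (simp add: power_mult_distrib)
  qed
  have "(\<lambda>k. exp (- l) * u * c * (z^k / fact k)) sums (exp (- l) * u * c * exp z)"
    by (intro sums_mult exp_sums)
  then have "(\<Sum>k. xstar_pmf l (Suc k) * (exp (- x * real (Suc k)) * c)) = exp (- l) * u * c * exp z"
    unfolding xs by (rule sums_unique[symmetric])
  then show ?thesis using tendsto_Lim[OF _ T] unfolding c_def z_def u_def by simp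
qed

lemma LF_closed:
  assumes l: "l > 0"
  shows "LF l x = cc l * (exp (l * exp (- x)) - 1)"
proof -
  have eq: "exp (- x * real (Suc k)) * ztp_pmf l (Suc k) = cc l * ((l * exp (- x)) ^ Suc k / fact (Suc k))" for k
  proof -
    have "exp (- x * real (Suc k)) = exp (- x) ^ Suc k"
      by (subst exp_of_nat_mult[symmetric]) (simp add: mult.commute)
    then show ?thesis unfolding ztp_pmf_def cc_def by (simp add: power_mult_distrib)
  qed
  show ?thesis unfolding LF_def eq
    by (rule sums_unique[symmetric]) (intro sums_mult alpha_sums)
qed


lemma cc_prop: assumes "l > 0" shows "cc l * (exp l - 1) = 1"
proof -
  have "exp (- l) * (exp l - 1) = 1 - exp (- l)" by (simp add: algebra_simps exp_minus_inverse)
  moreover have "1 - exp (- l) \<noteq> 0" using assms by simp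
  ultimately show ?thesis unfolding cc_def by simp
qed

lemma aux_cancel: fixes a r b c l :: real shows "r * l \<noteq> 0 \<Longrightarrow> a * (r * b * (c * l)) / (r * l) = a * b * c"
  by (simp add: field_simps)

lemma Rinf_val:
  assumes l: "l > 0" and n: "n = Suc (Suc m)"
  shows "Rinf l n = (1 - exp (- l)) / (real n * l)"
proof -
  define g where "g y = exp (- l) * exp (l * y) * (cc l * (exp (l * y) - 1)) ^ Suc m" for y
  have "Rinf l n = (LBINT x:{0<..}. g (exp (- x)) * exp (- x))"
    unfolding Rinf_def
  proof (rule set_lebesgue_integral_cong)
    show "\<forall>x. x \<in> {0<..} \<longrightarrow> Lim at_top (\<lambda>eps. EH l x eps) * LF l x ^ (n - 2) = g (exp (- x)) * exp (- x)"
    proof (intro allI impI)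
      fix x :: real assume "x \<in> {0<..}"
      then have x: "x > 0" by simp
      show "Lim at_top (\<lambda>eps. EH l x eps) * LF l x ^ (n - 2) = g (exp (- x)) * exp (- x)"
        unfolding EH_attop[OF l x] LF_closed[OF l] g_def n by (simp add: algebra_simps)
    qed
  qed simp
  also have "\<dots> = (LBINT y:{0..1}. g y)"
  proof (rule subst01)
    show "continuous_on {0..1} g" unfolding g_def by (intro continuous_intros)
    fix y :: real assume "y \<in> {0..1}"
    then have "exp (l * y) - 1 \<ge> 0" using l by simp
    then show "0 \<le> g y" unfolding g_def using cc_pos[OF l] by simp
  qed
  also have "\<dots> = (LBINT y=ereal 0..ereal 1. g y)" by (rule interval_integral_Icc[symmetric]) simp
  also have "\<dots> = exp (- l) * cc l ^ Suc m * (exp (l * 1) - 1) ^ n / (real n * l)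
                 - exp (- l) * cc l ^ Suc m * (exp (l * 0) - 1) ^ n / (real n * l)"
  proof (rule interval_integral_FTC_finite)
    show "continuous_on {min 0 1..max 0 1} g" unfolding g_def by (intro continuous_intros)
    fix y :: real
    have "((\<lambda>y. exp (- l) * cc l ^ Suc m * (exp (l * y) - 1) ^ n / (real n * l)) has_real_derivative
        exp (- l) * cc l ^ Suc m * (real n * (exp (l * y) - 1) ^ (n - 1) * (exp (l * y) * l)) / (real n * l)) (at y)"
      by (auto intro!: derivative_eq_intros)
    moreover have "exp (- l) * cc l ^ Suc m * (real n * (exp (l * y) - 1) ^ (n - 1) * (exp (l * y) * l)) / (real n * l) = g y"
    proof -
      have r: "real n * l \<noteq> 0" using l n by simp
      have "exp (- l) * cc l ^ Suc m * (real n * (exp (l * y) - 1) ^ (n - 1) * (exp (l * y) * l)) / (real n * l)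
          = exp (- l) * cc l ^ Suc m * (exp (l * y) - 1) ^ (n - 1) * exp (l * y)"
        using r by (simp add: aux_cancel)
      also have "\<dots> = g y" unfolding g_def n by (simp add: power_mult_distrib mult_ac)
      finally show ?thesis .
    qed
    ultimately show "((\<lambda>y. exp (- l) * cc l ^ Suc m * (exp (l * y) - 1) ^ n / (real n * l)) has_vector_derivative g y)
        (at y within {min 0 1..max 0 1})"
      by (simp add: has_real_derivative_iff_has_vector_derivative[symmetric] has_field_derivative_at_within)
  qed
  also have "\<dots> = exp (- l) * (cc l * (exp l - 1)) ^ Suc m * (exp l - 1) / (real n * l)"
    unfolding n by (simp add: power_mult_distrib)
  also have "\<dots> = (1 - exp (- l)) / (real n * l)"
    unfolding cc_prop[OF l] by (simp add: algebra_simps exp_minus_inverse)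
  finally show ?thesis .
qed


lemma I0_powser: "I0 w = (\<Sum>k. (1 / (fact k)^2) * (w^2/4)^k)"
proof -
  have "(w / 2) ^ (2 * k) / (fact k)^2 = (1 / (fact k)^2) * (w^2/4)^k" for k :: nat
    by (simp add: power_mult power_divide)
  then show ?thesis unfolding I0_def by simp
qed

lemma I0_cont: "isCont I0 w"
proof -
  have sm: "summable (\<lambda>k. (1 / (fact k)^2) * v^k)" for v :: real
  proof (rule summable_comparison_test[OF _ sums_summable[OF exp_sums[of "\<bar>v\<bar>"]]])
    show "\<exists>N. \<forall>k\<ge>N. norm ((1 / (fact k)^2) * v^k) \<le> \<bar>v\<bar>^k / fact k"
    proof (intro exI allI impI)
      fix k :: nat
      have f1: "(1::real) \<le> fact k" by simp
      have "norm ((1 / (fact k)^2) * v^k) = \<bar>v\<bar>^k / (fact k * fact k)"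
        by (simp add: power2_eq_square power_abs)
      also have "\<dots> \<le> \<bar>v\<bar>^k / fact k"
        using f1 by (intro divide_left_mono) (auto intro: order_trans[OF _ mult_right_mono[OF f1]])
      finally show "norm ((1 / (fact k)^2) * v^k) \<le> \<bar>v\<bar>^k / fact k" .
    qed
  qed
  have c: "isCont (\<lambda>v. \<Sum>k. (1 / (fact k)^2) * v^k) (w^2/4)"
    by (rule isCont_powser_converges_everywhere[OF sm])
  have "isCont (\<lambda>w. (\<Sum>k. (1 / (fact k)^2) * (w^2/4)^k)) w"
    using continuous_at_compose[of w "\<lambda>w. w^2/4" "\<lambda>v. \<Sum>k. (1 / (fact k)^2) * v^k"] c
    by (simp add: o_def)
  then show ?thesis unfolding I0_powser[abs_def] .
qed

lemma continuous_on_I0[continuous_intros]: "continuous_on S f \<Longrightarrow> continuous_on S (\<lambda>x. I0 (f x))"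
  using continuous_on_compose2[of UNIV I0 S f] continuous_at_imp_continuous_on[of UNIV I0] I0_cont by auto

lemma I0_ge1: fixes z :: real shows "I0 (2 * z) \<ge> 1"
proof -
  have "0 \<le> (\<Sum>k. (z ^ Suc k / fact (Suc k))^2)"
    by (intro suminf_nonneg sums_summable[OF I0_sums]) simp
  then show ?thesis using sums_unique[OF I0_sums[of z]] by simp
qed

lemma aux_cancel2: fixes r e l P :: real shows "r * l \<noteq> 0 \<Longrightarrow> r * (e * l) * P / (r * l) = e * P"
  by (simp add: field_simps)

lemma alg_final: fixes a l M :: real assumes l: "l > 0" and M: "M \<ge> 0"
  shows "(1 - a) / 2 / ((M + 2) * l) - a / 2 / ((M + 1) * l) = (a + (M + 2) - 1) / (2 * (M + 2) * ((M + 2) - 1) * l) - a / (((M + 2) - 1) * l)"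
proof -
  have p: "(M + 2) * l \<noteq> 0" "(M + 1) * l \<noteq> 0" "M + 1 \<noteq> 0" "M + 2 \<noteq> 0" "l \<noteq> 0" using l M by auto
  show ?thesis using p by (simp add: divide_simps) (simp add: algebra_simps)
qed

lemma R1_val:
  assumes l: "l > 0" and n: "n = Suc (Suc m)"
  shows "R1 l n =
           exp (- real n * l) / (2 * (1 - exp (- l)) ^ (n - 1))
             * (LBINT y:{0..1}. I0 (2 * l * y) * (exp (l * y) - 1) ^ (n - 2))
           + (exp (- l) + real n - 1) / (2 * real n * (real n - 1) * l)
           - exp (- l) / ((real n - 1) * l)"
proof -
  define K where "K = exp (- l) * cc l ^ Suc m / 2"
  define E where "E y = exp (l * y) - 1" for y
  define g1 where "g1 y = I0 (2 * (l * y)) * E y ^ m" for y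
  have nm: "n - 2 = m" using n by simp
  have alg: "a * u * c * (E0^2 + I - 1) / 2 * (c * E0) ^ m
      = (a * c ^ Suc m / 2 * (I * E0 ^ m) + a * c ^ Suc m / 2 * ((E0^2 - 1) * E0 ^ m)) * u"
    for a u c E0 I :: real by (simp add: power_mult_distrib field_simps)
  define g2 where "g2 y = (E y ^ 2 - 1) * E y ^ m" for y
  define g where "g y = K * g1 y + K * g2 y" for y
  have cg1: "continuous_on {0..1} g1" unfolding g1_def E_def by (intro continuous_intros)
  have cg2: "continuous_on {0..1} g2" unfolding g2_def E_def by (intro continuous_intros)
  have "R1 l n = (LBINT x:{0<..}. g (exp (- x)) * exp (- x))"
    unfolding R1_def
  proof (rule set_lebesgue_integral_cong)
    show "\<forall>x. x \<in> {0<..} \<longrightarrow> Lim (at 1) (\<lambda>eps. EH l x eps) * LF l x ^ (n - 2) = g (exp (- x)) * exp (- x)"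
    proof (intro allI impI)
      fix x :: real assume "x \<in> {0<..}"
      then have x: "x > 0" by simp
      show "Lim (at 1) (\<lambda>eps. EH l x eps) * LF l x ^ (n - 2) = g (exp (- x)) * exp (- x)"
        unfolding EH_at1[OF l x] LF_closed[OF l] nm g_def g1_def g2_def E_def K_def
        by (rule alg)
    qed
  qed simp
  also have "\<dots> = (LBINT y:{0..1}. g y)"
  proof (rule subst01)
    show "continuous_on {0..1} g" unfolding g_def by (intro continuous_intros cg1 cg2)
    fix y :: real assume "y \<in> {0..1}"
    then have e: "E y \<ge> 0" using l by (simp add: E_def)
    have i: "I0 (2 * (l * y)) \<ge> 1" using I0_ge1[of "l * y"] .
    have "g y = K * ((I0 (2 * (l * y)) - 1 + E y ^ 2) * E y ^ m)"
      unfolding g_def g1_def g2_def by (simp add: algebra_simps)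
    moreover have "K \<ge> 0" unfolding K_def using cc_pos[OF l] by simp
    ultimately show "0 \<le> g y" using e i by simp
  qed
  also have "\<dots> = K * (LBINT y:{0..1}. g1 y) + K * (LBINT y:{0..1}. g2 y)"
    unfolding g_def
    using set_integral_add(2)[OF set_integrable_mult_right[OF borel_integrable_atLeastAtMost'[OF cg1]]
        set_integrable_mult_right[OF borel_integrable_atLeastAtMost'[OF cg2]]]
    by simp
  also have "(LBINT y:{0..1}. g2 y) = (exp l - 1) ^ Suc (Suc m) / (real (Suc (Suc m)) * l)
      - (exp l - 1) ^ Suc m / (real (Suc m) * l)"
  proof -
    define F where "F y = E y ^ Suc (Suc m) / (real (Suc (Suc m)) * l) - E y ^ Suc m / (real (Suc m) * l)" for y
    have "(LBINT y:{0..1}. g2 y) = (LBINT y=ereal 0..ereal 1. g2 y)" by (rule interval_integral_Icc[symmetric]) simp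
    also have "\<dots> = F 1 - F 0"
    proof (rule interval_integral_FTC_finite)
      show "continuous_on {min 0 1..max 0 1} g2" using cg2 by simp
      fix y :: real
      have e: "DERIV E y :> exp (l * y) * l" unfolding E_def by (auto intro!: derivative_eq_intros)
      have d1: "DERIV (\<lambda>y. E y ^ Suc (Suc m)) y :> real (Suc (Suc m)) * (exp (l * y) * l) * E y ^ Suc m"
        using DERIV_power[OF e, of "Suc (Suc m)"] by (simp only: diff_Suc_Suc diff_zero mult.assoc)
      have d2: "DERIV (\<lambda>y. E y ^ Suc m) y :> real (Suc m) * (exp (l * y) * l) * E y ^ m"
        using DERIV_power[OF e, of "Suc m"] by (simp only: diff_Suc_Suc diff_zero mult.assoc)
      have "DERIV F y :> real (Suc (Suc m)) * (exp (l * y) * l) * E y ^ Suc m / (real (Suc (Suc m)) * l)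
          - real (Suc m) * (exp (l * y) * l) * E y ^ m / (real (Suc m) * l)"
        unfolding F_def[abs_def] by (intro DERIV_diff DERIV_cdivide d1 d2)
      moreover have "real (Suc (Suc m)) * (exp (l * y) * l) * E y ^ Suc m / (real (Suc (Suc m)) * l)
          - real (Suc m) * (exp (l * y) * l) * E y ^ m / (real (Suc m) * l) = g2 y"
      proof -
        have a: "real (Suc (Suc m)) * l \<noteq> 0" "real (Suc m) * l \<noteq> 0" using l by auto
        have "real (Suc (Suc m)) * (exp (l * y) * l) * E y ^ Suc m / (real (Suc (Suc m)) * l)
            = exp (l * y) * E y ^ Suc m" using aux_cancel2[OF a(1)] .
        moreover have "real (Suc m) * (exp (l * y) * l) * E y ^ m / (real (Suc m) * l)
            = exp (l * y) * E y ^ m" using aux_cancel2[OF a(2)] .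
        moreover have "exp (l * y) = E y + 1" unfolding E_def by simp
        ultimately show ?thesis unfolding g2_def by (simp add: algebra_simps power2_eq_square)
      qed
      ultimately show "(F has_vector_derivative g2 y) (at y within {min 0 1..max 0 1})"
        by (simp add: has_real_derivative_iff_has_vector_derivative[symmetric] has_field_derivative_at_within)
    qed
    also have "\<dots> = (exp l - 1) ^ Suc (Suc m) / (real (Suc (Suc m)) * l)
      - (exp l - 1) ^ Suc m / (real (Suc m) * l)" unfolding F_def E_def by simp
    finally show ?thesis .
  qed
  finally have R: "R1 l n = K * (LBINT y:{0..1}. g1 y) + K * ((exp l - 1) ^ Suc (Suc m) / (real (Suc (Suc m)) * l)
      - (exp l - 1) ^ Suc m / (real (Suc m) * l))" .
  have K0: "K = exp (- real n * l) / (2 * (1 - exp (- l)) ^ (n - 1))"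
  proof -
    have "exp (- real n * l) = exp (- l) ^ n" by (subst exp_of_nat_mult[symmetric]) simp
    then show ?thesis unfolding K_def cc_def n by (simp add: power_divide)
  qed
  have K1: "K * (exp l - 1) ^ Suc (Suc m) = (1 - exp (- l)) / 2"
  proof -
    have "K * (exp l - 1) ^ Suc (Suc m) = exp (- l) * (cc l * (exp l - 1)) ^ Suc m * (exp l - 1) / 2"
      unfolding K_def by (simp add: power_mult_distrib)
    also have "\<dots> = (1 - exp (- l)) / 2" unfolding cc_prop[OF l] by (simp add: algebra_simps exp_minus_inverse)
    finally show ?thesis .
  qed
  have K2: "K * (exp l - 1) ^ Suc m = exp (- l) / 2"
  proof -
    have "K * (exp l - 1) ^ Suc m = exp (- l) * (cc l * (exp l - 1)) ^ Suc m / 2"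
      unfolding K_def by (simp add: power_mult_distrib)
    then show ?thesis unfolding cc_prop[OF l] by simp
  qed
  have "K * ((exp l - 1) ^ Suc (Suc m) / (real (Suc (Suc m)) * l) - (exp l - 1) ^ Suc m / (real (Suc m) * l))
      = (K * (exp l - 1) ^ Suc (Suc m)) / (real (Suc (Suc m)) * l) - (K * (exp l - 1) ^ Suc m) / (real (Suc m) * l)"
    by (simp add: algebra_simps)
  also have "\<dots> = (1 - exp (- l)) / 2 / (real (Suc (Suc m)) * l) - exp (- l) / 2 / (real (Suc m) * l)"
    unfolding K1 K2 ..
  also have "\<dots> = (exp (- l) + real n - 1) / (2 * real n * (real n - 1) * l) - exp (- l) / ((real n - 1) * l)"
  proof -
    have e1: "real (Suc (Suc m)) = real m + 2" "real (Suc m) = real m + 1" by simp_all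
    show ?thesis unfolding n e1 using alg_final[OF l, of "real m" "exp (- l)"] by simp
  qed
  finally have K3: "K * ((exp l - 1) ^ Suc (Suc m) / (real (Suc (Suc m)) * l) - (exp l - 1) ^ Suc m / (real (Suc m) * l))
      = (exp (- l) + real n - 1) / (2 * real n * (real n - 1) * l) - exp (- l) / ((real n - 1) * l)" .
  have g1n: "(LBINT y:{0..1}. g1 y) = (LBINT y:{0..1}. I0 (2 * l * y) * (exp (l * y) - 1) ^ (n - 2))"
    unfolding g1_def E_def nm by (simp add: mult.assoc)
  show ?thesis unfolding R unfolding K3 g1n unfolding K0 by simp
qed


theorem mainTheorem6:
  fixes l :: real and n :: nat
  assumes "l > 0" and "n \<ge> 2"
  shows "R1 l n =
           exp (- real n * l) / (2 * (1 - exp (- l)) ^ (n - 1))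
             * (LBINT y:{0..1}. I0 (2 * l * y) * (exp (l * y) - 1) ^ (n - 2))
           + (exp (- l) + real n - 1) / (2 * real n * (real n - 1) * l)
           - exp (- l) / ((real n - 1) * l)
         \<and> Rinf l n = (1 - exp (- l)) / (real n * l)"
proof -
  obtain m where n: "n = Suc (Suc m)" using assms(2) by (metis add_2_eq_Suc le_Suc_ex)
  show ?thesis using R1_val[OF assms(1) n] Rinf_val[OF assms(1) n] by simp
qed

end
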